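(* Let $\mathscr T=(V,\mathcal E)$ be the directed Cartesian product of locally finite rooted directed trees $\mathscr T_1,\dots,\mathscr T_d$ and let $\{c_t\}_{t\in\mathbb N}$ be a bounded sequence of positive real numbers. Consider the multishift $S_{\boldsymbol\lambda_{\mathfrak C}}=(S_1,\dots,S_d)$ on $\mathscr T$ with weights $$\lambda^{(i)}_w=\sqrt{\frac{c_{|\alpha_v|}}{\mathrm{card}(\mathsf{Chi}_i(v))}}\sqrt{\frac{\alpha_{v_i}+1}{|\alpha_v|+d}}\qquad(w\in\mathsf{Chi}_i(v),\ v\in V,\ i=1,\dots,d).$$ Then $S_{\boldsymbol\lambda_{\mathfrak C}}$ is a (bounded, commuting) spherically balanced multishift. If $c_t=1$ for all $t\in\mathbb N$, then $S_{\boldsymbol\lambda_{\mathfrak C}}$ is a joint isometry.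
   Context: Directed trees: no loops or circuits, connected ignoring orientation, unique parent for vertices with incoming edges; rooted: unique parentless vertex $\mathsf{root}$; $\mathsf{Chi}(u)=\{v:(u,v)\in\mathcal E\}$; locally finite: all $\mathsf{Chi}(u)$ finite; all leafless. Depth of $u$: $n$ with $u\in\mathsf{Chi}^n(\mathsf{root})$. Directed Cartesian product of rooted trees $\mathscr T_j=(V_j,\mathcal E_j)$: $V=V_1\times\dots\times V_d$ (countably infinite), $(v,w)\in\mathcal E$ iff for some $k$, $(v_k,w_k)\in\mathcal E_k$ and $w_j=v_j$ ($j\ne k$). $\mathsf{Chi}_j(v)=\{w:w_j\in\mathsf{Chi}(v_j),w_k=v_k\ (k\ne j)\}$. Depth $\alpha_v=(\alpha_{v_1},\dots,\alpha_{v_d})$ with $\alpha_{v_j}$ the depth of $v_j$ in $\mathscr T_j$; generation $\mathcal G_t=\{v:|\alpha_v|=t\}$. The multishift acts by $S_je_v=\sum_{w\in\mathsf{Chi}_j(v)}\lambda^{(j)}_we_w$ on $l^2(V)$. Spherically balanced: commuting and $\sum_j\|S_je_v\|^2$ constant on each $\mathcal G_t$. Joint isometry: $\sum_jS_j^*S_j=I$. *)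

theory Defs
  imports "HOL-Analysis.Analysis"
begin

definition rooted_dtree :: "'a set \<Rightarrow> ('a \<times> 'a) set \<Rightarrow> 'a \<Rightarrow> bool" where
  "rooted_dtree V E r \<longleftrightarrow>
     E \<subseteq> V \<times> V \<and>
     acyclic E \<and>
     (\<forall>u\<in>V. \<forall>v\<in>V. (u, v) \<in> (E \<union> E\<inverse>)\<^sup>*) \<and>
     (\<forall>u1 u2 v. (u1, v) \<in> E \<and> (u2, v) \<in> E \<longrightarrow> u1 = u2) \<and>
     r \<in> V \<and>
     (\<forall>v\<in>V. (\<nexists>u. (u, v) \<in> E) \<longleftrightarrow> v = r)"

definition chi :: "('a \<times> 'a) set \<Rightarrow> 'a \<Rightarrow> 'a set" where
  "chi E u = {v. (u, v) \<in> E}"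

definition locally_finite_tree :: "'a set \<Rightarrow> ('a \<times> 'a) set \<Rightarrow> bool" where
  "locally_finite_tree V E \<longleftrightarrow> (\<forall>u\<in>V. finite (chi E u))"

definition leafless :: "'a set \<Rightarrow> ('a \<times> 'a) set \<Rightarrow> bool" where
  "leafless V E \<longleftrightarrow> (\<forall>u\<in>V. chi E u \<noteq> {})"

definition depth :: "('a \<times> 'a) set \<Rightarrow> 'a \<Rightarrow> 'a \<Rightarrow> nat" where
  "depth E r v = (THE n. (r, v) \<in> E ^^ n)"

definition prodV :: "nat \<Rightarrow> (nat \<Rightarrow> 'a set) \<Rightarrow> (nat \<Rightarrow> 'a) set" where
  "prodV d Vs = PiE {..<d} Vs"

definition chi_prod :: "nat \<Rightarrow> (nat \<Rightarrow> 'a set) \<Rightarrow> (nat \<Rightarrow> ('a \<times> 'a) set) \<Rightarrow>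
    nat \<Rightarrow> (nat \<Rightarrow> 'a) \<Rightarrow> (nat \<Rightarrow> 'a) set" where
  "chi_prod d Vs Es i v =
     {w \<in> prodV d Vs. (v i, w i) \<in> Es i \<and> (\<forall>k. k \<noteq> i \<longrightarrow> w k = v k)}"

definition abs_depth :: "nat \<Rightarrow> (nat \<Rightarrow> ('a \<times> 'a) set) \<Rightarrow> (nat \<Rightarrow> 'a) \<Rightarrow> (nat \<Rightarrow> 'a) \<Rightarrow> nat" where
  "abs_depth d Es rs v = (\<Sum>j<d. depth (Es j) (rs j) (v j))"

definition in_l2 :: "'v set \<Rightarrow> ('v \<Rightarrow> complex) \<Rightarrow> bool" where
  "in_l2 V f \<longleftrightarrow> (\<forall>v. v \<notin> V \<longrightarrow> f v = 0) \<and> (\<lambda>v. (norm (f v))\<^sup>2) summable_on V"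

definition l2norm :: "'v set \<Rightarrow> ('v \<Rightarrow> complex) \<Rightarrow> real" where
  "l2norm V f = sqrt (\<Sum>\<^sub>\<infinity>v\<in>V. (norm (f v))\<^sup>2)"

definition l2inner :: "'v set \<Rightarrow> ('v \<Rightarrow> complex) \<Rightarrow> ('v \<Rightarrow> complex) \<Rightarrow> complex" where
  "l2inner V f g = (\<Sum>\<^sub>\<infinity>v\<in>V. f v * cnj (g v))"

definition ebasis :: "'v \<Rightarrow> 'v \<Rightarrow> complex" where
  "ebasis v = (\<lambda>w. if w = v then 1 else 0)"

text \<open>Weighted multishift: (S_i f)(w) = lambda^(i)_w f(parent_i(w)) if w has an i-parent,
  and 0 otherwise (the set of i-parents of w has at most one element).\<close>
definition mshift :: "'v set \<Rightarrow> (nat \<Rightarrow> 'v \<Rightarrow> 'v set) \<Rightarrow> (nat \<Rightarrow> 'v \<Rightarrow> real) \<Rightarrow>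
    nat \<Rightarrow> ('v \<Rightarrow> complex) \<Rightarrow> 'v \<Rightarrow> complex" where
  "mshift V Chi lam i f w = (\<Sum>v\<in>{v\<in>V. w \<in> Chi i v}. complex_of_real (lam i w) * f v)"

definition bounded_op :: "'v set \<Rightarrow> (('v \<Rightarrow> complex) \<Rightarrow> ('v \<Rightarrow> complex)) \<Rightarrow> bool" where
  "bounded_op V T \<longleftrightarrow>
     (\<exists>C. \<forall>f. in_l2 V f \<longrightarrow> in_l2 V (T f) \<and> l2norm V (T f) \<le> C * l2norm V f)"

definition commuting :: "nat \<Rightarrow> 'v set \<Rightarrow> (nat \<Rightarrow> ('v \<Rightarrow> complex) \<Rightarrow> ('v \<Rightarrow> complex)) \<Rightarrow> bool" where
  "commuting d V S \<longleftrightarrow> (\<forall>i<d. \<forall>j<d. \<forall>f. in_l2 V f \<longrightarrow> S i (S j f) = S j (S i f))"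

definition spherically_balanced :: "nat \<Rightarrow> 'v set \<Rightarrow> ('v \<Rightarrow> nat) \<Rightarrow>
    (nat \<Rightarrow> ('v \<Rightarrow> complex) \<Rightarrow> ('v \<Rightarrow> complex)) \<Rightarrow> bool" where
  "spherically_balanced d V gen S \<longleftrightarrow>
     commuting d V S \<and>
     (\<forall>t. \<exists>K. \<forall>v\<in>V. gen v = t \<longrightarrow> (\<Sum>j<d. (l2norm V (S j (ebasis v)))\<^sup>2) = K)"

text \<open>Joint isometry: sum_j S_j^* S_j = I, i.e. sum_j <S_j f, S_j g> = <f, g> for all f, g in l^2(V).\<close>
definition joint_isometry :: "nat \<Rightarrow> 'v set \<Rightarrow> (nat \<Rightarrow> ('v \<Rightarrow> complex) \<Rightarrow> ('v \<Rightarrow> complex)) \<Rightarrow> bool" where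
  "joint_isometry d V S \<longleftrightarrow>
     (\<forall>f g. in_l2 V f \<and> in_l2 V g \<longrightarrow> (\<Sum>j<d. l2inner V (S j f) (S j g)) = l2inner V f g)"

text \<open>The i-parent of w in the product (only used when w has one).\<close>
definition parent_prod :: "nat \<Rightarrow> (nat \<Rightarrow> 'a set) \<Rightarrow> (nat \<Rightarrow> ('a \<times> 'a) set) \<Rightarrow>
    nat \<Rightarrow> (nat \<Rightarrow> 'a) \<Rightarrow> (nat \<Rightarrow> 'a)" where
  "parent_prod d Vs Es i w = (THE v. v \<in> prodV d Vs \<and> w \<in> chi_prod d Vs Es i v)"

definition lamC :: "nat \<Rightarrow> (nat \<Rightarrow> 'a set) \<Rightarrow> (nat \<Rightarrow> ('a \<times> 'a) set) \<Rightarrow> (nat \<Rightarrow> 'a) \<Rightarrow>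
    (nat \<Rightarrow> real) \<Rightarrow> nat \<Rightarrow> (nat \<Rightarrow> 'a) \<Rightarrow> real" where
  "lamC d Vs Es rs c i w =
     (let v = parent_prod d Vs Es i w;
          t = abs_depth d Es rs v
      in sqrt (c t / real (card (chi_prod d Vs Es i v)))
         * sqrt ((real (depth (Es i) (rs i) (v i)) + 1) / (real t + real d)))"

end

theory Submission
  imports Defs
begin

lemma has_sum_sum_fin:
  fixes f :: "'i \<Rightarrow> 'a \<Rightarrow> 'b::topological_comm_monoid_add"
  assumes "finite I" "\<And>j. j \<in> I \<Longrightarrow> (f j has_sum s j) A"
  shows "((\<lambda>x. \<Sum>j\<in>I. f j x) has_sum (\<Sum>j\<in>I. s j)) A"
  using assms
proof (induction I rule: finite_induct)
  case empty then show ?case by simp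
next
  case (insert j I)
  then show ?case by (simp add: has_sum_add)
qed

lemma transfer_has_sum:
  fixes h :: "'b \<Rightarrow> 'c::{banach,uniform_topological_group_add}" and B :: "'a \<Rightarrow> 'b set"
  assumes fin: "\<And>v. v\<in>V \<Longrightarrow> finite (B v)"
    and disj: "\<And>v v'. v\<in>V \<Longrightarrow> v'\<in>V \<Longrightarrow> v \<noteq> v' \<Longrightarrow> B v \<inter> B v' = {}"
    and sm: "(\<lambda>v. \<Sum>w\<in>B v. norm (h w)) summable_on V"
  shows "(h has_sum (\<Sum>\<^sub>\<infinity>v\<in>V. \<Sum>w\<in>B v. h w)) (\<Union>v\<in>V. B v)"
proof -
  have ns: "(\<lambda>p. norm (h (snd p))) summable_on Sigma V B"
  proof (rule summable_on_SigmaI[where g="\<lambda>v. \<Sum>w\<in>B v. norm (h w)"])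
    fix v assume "v \<in> V"
    then show "((\<lambda>y. norm (h (snd (v, y)))) has_sum (\<Sum>w\<in>B v. norm (h w))) (B v)"
      using fin has_sum_finite by fastforce
  qed (use sm in auto)
  then have "(\<lambda>p. h (snd p)) summable_on Sigma V B"
    by (rule abs_summable_summable)
  then have hs: "((\<lambda>p. h (snd p)) has_sum (\<Sum>\<^sub>\<infinity>p\<in>Sigma V B. h (snd p))) (Sigma V B)"
    by (rule has_sum_infsum)
  have b: "((\<lambda>v. \<Sum>w\<in>B v. h w) has_sum (\<Sum>\<^sub>\<infinity>p\<in>Sigma V B. h (snd p))) V"
  proof (rule has_sum_Sigma'[OF hs])
    fix v assume "v \<in> V"
    then show "((\<lambda>y. h (snd (v, y))) has_sum (\<Sum>w\<in>B v. h w)) (B v)"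
      using fin has_sum_finite by fastforce
  qed
  have eq: "(\<Sum>\<^sub>\<infinity>v\<in>V. \<Sum>w\<in>B v. h w) = (\<Sum>\<^sub>\<infinity>p\<in>Sigma V B. h (snd p))"
    using b by (rule infsumI)
  have inj: "inj_on snd (Sigma V B)"
  proof (rule inj_onI)
    fix p q assume p: "p \<in> Sigma V B" and q: "q \<in> Sigma V B" and e: "snd p = snd q"
    obtain a b where pab: "p = (a, b)" by fastforce
    obtain a' b' where qab: "q = (a', b')" by fastforce
    have "a = a'"
    proof (rule ccontr)
      assume "a \<noteq> a'"
      then have "B a \<inter> B a' = {}" using disj p q pab qab by blast
      then show False using p q pab qab e by auto
    qed
    then show "p = q" using pab qab e by simp
  qed
  have img: "snd ` Sigma V B = (\<Union>v\<in>V. B v)" by force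
  have bij: "bij_betw snd (Sigma V B) (\<Union>v\<in>V. B v)"
    using inj img by (simp add: bij_betw_def)
  show ?thesis
    using hs unfolding eq has_sum_reindex_bij_betw[OF bij, symmetric] .
qed

lemma tree_path_exists:
  assumes T: "rooted_dtree V E r" and v: "v \<in> V"
  shows "\<exists>n. (r, v) \<in> E ^^ n"
proof -
  have D: "E \<subseteq> V \<times> V \<and> acyclic E \<and> (\<forall>u\<in>V. \<forall>v\<in>V. (u, v) \<in> (E \<union> E\<inverse>)\<^sup>*) \<and>
     (\<forall>u1 u2 v. (u1, v) \<in> E \<and> (u2, v) \<in> E \<longrightarrow> u1 = u2) \<and> r \<in> V \<and>
     (\<forall>v\<in>V. (\<nexists>u. (u, v) \<in> E) \<longleftrightarrow> v = r)"
    using T unfolding rooted_dtree_def .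
  have rV: "r \<in> V" using D by simp
  have conn: "(r, v) \<in> (E \<union> E\<inverse>)\<^sup>*" using D rV v by simp
  have up: "\<And>u1 u2 v. (u1, v) \<in> E \<Longrightarrow> (u2, v) \<in> E \<Longrightarrow> u1 = u2" using D by blast
  have noparent: "\<And>u. (u, r) \<notin> E"
  proof
    fix u assume "(u, r) \<in> E"
    moreover have "(\<nexists>u. (u, r) \<in> E) \<longleftrightarrow> r = r" using D rV by blast
    ultimately show False by blast
  qed
  from conn show ?thesis
  proof (induction rule: rtrancl_induct)
    case base
    then show ?case by (rule exI[of _ 0]) simp
  next
    case (step y z)
    then obtain n where n: "(r, y) \<in> E ^^ n" by blast
    from step(2) show ?case
    proof
      assume "(y, z) \<in> E"
      then have "(r, z) \<in> E ^^ Suc n" using n by auto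
      then show ?thesis by blast
    next
      assume "(y, z) \<in> E\<inverse>"
      then have zy: "(z, y) \<in> E" by simp
      show ?thesis
      proof (cases n)
        case 0
        then have "y = r" using n by simp
        then show ?thesis using zy noparent by blast
      next
        case (Suc m)
        then obtain x where "(r, x) \<in> E ^^ m" "(x, y) \<in> E" using n by (meson relpow_Suc_E)
        then have "x = z" using up zy by blast
        then show ?thesis using \<open>(r, x) \<in> E ^^ m\<close> by blast
      qed
    qed
  qed
qed

lemma tree_path_unique:
  assumes T: "rooted_dtree V E r"
  shows "(r, v) \<in> E ^^ n \<Longrightarrow> (r, v) \<in> E ^^ m \<Longrightarrow> n = m"
proof -
  from T have up: "\<And>u1 u2 v. (u1, v) \<in> E \<Longrightarrow> (u2, v) \<in> E \<Longrightarrow> u1 = u2"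
    and ac: "acyclic E"
    unfolding rooted_dtree_def by blast+
  have noloop: "\<And>k. k > 0 \<Longrightarrow> (r, r) \<notin> E ^^ k"
  proof
    fix k :: nat assume "k > 0" "(r, r) \<in> E ^^ k"
    then have "(r, r) \<in> E\<^sup>+" using trancl_power by blast
    then show False using ac unfolding acyclic_def by blast
  qed
  show "(r, v) \<in> E ^^ n \<Longrightarrow> (r, v) \<in> E ^^ m \<Longrightarrow> n = m"
  proof (induction n arbitrary: m v)
    case 0
    then have "v = r" by simp
    then show ?case using 0 noloop[of m] by (cases m) auto
  next
    case (Suc n)
    obtain x where x: "(r, x) \<in> E ^^ n" "(x, v) \<in> E" using Suc.prems(1) by (meson relpow_Suc_E)
    show ?case
    proof (cases m)
      case 0
      then have "v = r" using Suc.prems(2) by simp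
      then show ?thesis using Suc.prems(1) noloop[of "Suc n"] by simp
    next
      case (Suc k)
      obtain y where y: "(r, y) \<in> E ^^ k" "(y, v) \<in> E" using Suc.prems(2) \<open>m = Suc k\<close> by (meson relpow_Suc_E)
      have "x = y" using up x(2) y(2) by blast
      then have "n = k" using Suc.IH x(1) y(1) by blast
      then show ?thesis using \<open>m = Suc k\<close> by simp
    qed
  qed
qed

lemma depth_eq:
  assumes T: "rooted_dtree V E r" and "(r, v) \<in> E ^^ n"
  shows "depth E r v = n"
  unfolding depth_def using assms tree_path_unique[OF T] by blast

lemma depth_child:
  assumes T: "rooted_dtree V E r" and v: "v \<in> V" and e: "(v, w) \<in> E"
  shows "depth E r w = depth E r v + 1"
proof -
  obtain n where n: "(r, v) \<in> E ^^ n" using tree_path_exists[OF T v] by blast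
  then have "(r, w) \<in> E ^^ Suc n" using e by auto
  then show ?thesis using depth_eq[OF T] n by simp
qed


locale PT =
  fixes d :: nat and Vs :: "nat \<Rightarrow> 'a set" and Es :: "nat \<Rightarrow> ('a \<times> 'a) set"
    and rs :: "nat \<Rightarrow> 'a" and c :: "nat \<Rightarrow> real"
  assumes d1: "d \<ge> 1"
    and trees: "\<forall>j<d. rooted_dtree (Vs j) (Es j) (rs j) \<and> locally_finite_tree (Vs j) (Es j)
                \<and> leafless (Vs j) (Es j)"
    and cpos: "\<forall>t. c t > 0"
begin

abbreviation "V \<equiv> prodV d Vs"
abbreviation "Ch \<equiv> chi_prod d Vs Es"
abbreviation "lam \<equiv> lamC d Vs Es rs c"
abbreviation "S \<equiv> mshift V Ch lam"
abbreviation "tt \<equiv> abs_depth d Es rs"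
abbreviation "dep j x \<equiv> depth (Es j) (rs j) x"

definition A :: "nat \<Rightarrow> (nat \<Rightarrow> 'a) \<Rightarrow> real" where
  "A i v = c (tt v) * (real (dep i (v i)) + 1) / (real (tt v) + real d)"

lemma tree: "j < d \<Longrightarrow> rooted_dtree (Vs j) (Es j) (rs j)"
  using trees by blast

lemma Ch_sub: "w \<in> Ch i v \<Longrightarrow> w \<in> V"
  unfolding chi_prod_def by blast

lemma V_mem: "v \<in> V \<Longrightarrow> k < d \<Longrightarrow> v k \<in> Vs k"
  unfolding prodV_def by auto

lemma par_unique:
  assumes "i < d" "v \<in> V" "v' \<in> V" "w \<in> Ch i v" "w \<in> Ch i v'"
  shows "v = v'"
proof
  fix k
  show "v k = v' k"
  proof (cases "k = i")
    case True
    have "(v i, w i) \<in> Es i" "(v' i, w i) \<in> Es i" using assms(4,5) unfolding chi_prod_def by auto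
    then show ?thesis using tree[OF assms(1)] True unfolding rooted_dtree_def by blast
  next
    case False
    then show ?thesis using assms(4,5) unfolding chi_prod_def by auto
  qed
qed

lemma parent_eq:
  assumes "i < d" "v \<in> V" "w \<in> Ch i v"
  shows "parent_prod d Vs Es i w = v"
  unfolding parent_prod_def using assms par_unique by blast

lemma Ch_bij:
  assumes "i < d" "v \<in> V"
  shows "bij_betw (\<lambda>w. w i) (Ch i v) (chi (Es i) (v i))"
proof (rule bij_betw_imageI)
  show "inj_on (\<lambda>w. w i) (Ch i v)"
    unfolding inj_on_def chi_prod_def by (auto simp: fun_eq_iff) (metis)
  show "(\<lambda>w. w i) ` Ch i v = chi (Es i) (v i)"
  proof
    show "(\<lambda>w. w i) ` Ch i v \<subseteq> chi (Es i) (v i)"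
      unfolding chi_prod_def chi_def by auto
    show "chi (Es i) (v i) \<subseteq> (\<lambda>w. w i) ` Ch i v"
    proof
      fix a assume a: "a \<in> chi (Es i) (v i)"
      then have e: "(v i, a) \<in> Es i" unfolding chi_def by simp
      then have aV: "a \<in> Vs i" using tree[OF assms(1)] unfolding rooted_dtree_def by blast
      have "v(i := a) \<in> V" using assms aV unfolding prodV_def by (auto simp: PiE_iff extensional_def)
      then have "v(i := a) \<in> Ch i v" using e unfolding chi_prod_def by auto
      then show "a \<in> (\<lambda>w. w i) ` Ch i v" by (rule rev_image_eqI) simp
    qed
  qed
qed

lemma Ch_finite: "i < d \<Longrightarrow> v \<in> V \<Longrightarrow> finite (Ch i v)"
  using Ch_bij trees V_mem bij_betw_finite unfolding locally_finite_tree_def by metis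

lemma Ch_card: "i < d \<Longrightarrow> v \<in> V \<Longrightarrow> card (Ch i v) = card (chi (Es i) (v i))"
  using Ch_bij bij_betw_same_card by blast

lemma Ch_card_pos: "i < d \<Longrightarrow> v \<in> V \<Longrightarrow> card (Ch i v) > 0"
proof -
  assume a: "i < d" "v \<in> V"
  then have "chi (Es i) (v i) \<noteq> {}" "finite (chi (Es i) (v i))"
    using trees V_mem unfolding leafless_def locally_finite_tree_def by blast+
  then show ?thesis using Ch_card[OF a] by (simp add: card_gt_0_iff)
qed

lemma lam_eq:
  assumes "i < d" "v \<in> V" "w \<in> Ch i v"
  shows "lam i w = sqrt (c (tt v) / real (card (Ch i v)))
                 * sqrt ((real (dep i (v i)) + 1) / (real (tt v) + real d))"
  unfolding lamC_def Let_def parent_eq[OF assms] ..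

lemma lam_sq:
  assumes "i < d" "v \<in> V" "w \<in> Ch i v"
  shows "(lam i w)\<^sup>2 = c (tt v) / real (card (Ch i v)) * ((real (dep i (v i)) + 1) / (real (tt v) + real d))"
proof -
  have "c (tt v) > 0" using cpos by blast
  then show ?thesis unfolding lam_eq[OF assms] power_mult_distrib
    by (simp add: real_sqrt_pow2 )
qed

lemma A_sum:
  assumes "i < d" "v \<in> V"
  shows "(\<Sum>w\<in>Ch i v. (lam i w)\<^sup>2) = A i v"
proof -
  have "(\<Sum>w\<in>Ch i v. (lam i w)\<^sup>2) = (\<Sum>w\<in>Ch i v. c (tt v) / real (card (Ch i v)) * ((real (dep i (v i)) + 1) / (real (tt v) + real d)))"
    using lam_sq[OF assms] by simp
  also have "\<dots> = A i v"
    using Ch_card_pos[OF assms] unfolding A_def by simp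
  finally show ?thesis .
qed

lemma A_total:
  assumes "v \<in> V"
  shows "(\<Sum>i<d. A i v) = c (tt v)"
proof -
  have "(\<Sum>i<d. A i v) = c (tt v) * (\<Sum>i<d. (real (dep i (v i)) + 1)) / (real (tt v) + real d)"
    unfolding A_def by (simp add: sum_divide_distrib sum_distrib_left)
  also have "(\<Sum>i<d. (real (dep i (v i)) + 1)) = real (tt v) + real d"
    unfolding abs_depth_def by (simp add: sum.distrib)
  finally show ?thesis using d1 by simp
qed

lemma A_nonneg: "0 \<le> A i v"
  unfolding A_def using cpos by (simp add: less_imp_le)

lemma A_le: "i < d \<Longrightarrow> A i v \<le> c (tt v)"
proof -
  assume i: "i < d"
  have "dep i (v i) \<le> tt v" unfolding abs_depth_def
    using i by (intro member_le_sum) auto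
  then have "(real (dep i (v i)) + 1) / (real (tt v) + real d) \<le> 1"
    using d1 by simp
  moreover have "c (tt v) \<ge> 0" using cpos less_imp_le by blast
  ultimately have "c (tt v) * ((real (dep i (v i)) + 1) / (real (tt v) + real d)) \<le> c (tt v) * 1"
    by (intro mult_left_mono) auto
  then show ?thesis unfolding A_def by simp
qed

lemma S_at:
  assumes "i < d" "v \<in> V" "w \<in> Ch i v"
  shows "S i f w = complex_of_real (lam i w) * f v"
proof -
  have e: "{v'\<in>V. w \<in> Ch i v'} = {v}" using assms par_unique by blast
  show ?thesis unfolding mshift_def by (simp add: e)
qed

lemma S_zero:
  assumes "\<not> (\<exists>v\<in>V. w \<in> Ch i v)"
  shows "S i f w = 0"
proof -
  have e: "{v'\<in>V. w \<in> Ch i v'} = {}" using assms by blast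
  show ?thesis unfolding mshift_def by (simp only: e sum.empty)
qed

lemma tt_child:
  assumes "i < d" "v \<in> V" "w \<in> Ch i v"
  shows "tt w = tt v + 1"
proof -
  have e: "(v i, w i) \<in> Es i" and oth: "\<And>k. k \<noteq> i \<Longrightarrow> w k = v k" using assms(3) unfolding chi_prod_def by auto
  have di: "dep i (w i) = dep i (v i) + 1" using depth_child[OF tree[OF assms(1)] V_mem[OF assms(2,1)] e] .
  have "tt w = dep i (w i) + (\<Sum>k\<in>{..<d}-{i}. dep k (w k))" unfolding abs_depth_def
    using assms(1) by (simp add: sum.remove)
  also have "(\<Sum>k\<in>{..<d}-{i}. dep k (w k)) = (\<Sum>k\<in>{..<d}-{i}. dep k (v k))"
    using oth by (intro sum.cong) auto
  also have "dep i (w i) + (\<Sum>k\<in>{..<d}-{i}. dep k (v k)) = tt v + 1" unfolding abs_depth_def di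
    using assms(1) by (simp add: sum.remove)
  finally show ?thesis .
qed

end

context PT begin

lemma comm_aux:
  assumes "i \<noteq> j" "i < d" "j < d" "u \<in> V" "x \<in> V" "w \<in> Ch i u" "u \<in> Ch j x"
  shows "w(j := x j) \<in> V \<and> w \<in> Ch j (w(j := x j)) \<and> w(j := x j) \<in> Ch i x"
proof -
  have wV: "w \<in> V" using assms(6) by (rule Ch_sub)
  have w1: "\<And>k. k \<noteq> i \<Longrightarrow> w k = u k" and e1: "(u i, w i) \<in> Es i" using assms(6) unfolding chi_prod_def by auto
  have u1: "\<And>k. k \<noteq> j \<Longrightarrow> u k = x k" and e2: "(x j, u j) \<in> Es j" using assms(7) unfolding chi_prod_def by auto
  have yV: "w(j := x j) \<in> V" using wV assms(3,5) unfolding prodV_def by (auto simp: PiE_iff extensional_def)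
  moreover have "w \<in> Ch j (w(j := x j))"
    using wV e2 w1[of j] assms(1) unfolding chi_prod_def by auto
  moreover have "w(j := x j) \<in> Ch i x"
    using yV e1 u1[of i] assms(1) w1 u1 unfolding chi_prod_def by auto
  ultimately show ?thesis by blast
qed

lemma lam_comm:
  assumes "i \<noteq> j" "i < d" "j < d" "u \<in> V" "x \<in> V" "w \<in> Ch i u" "u \<in> Ch j x"
    and y: "y \<in> V" "w \<in> Ch j y" "y \<in> Ch i x"
  shows "lam i w * lam j u = lam j w * lam i y"
proof -
  have u1: "\<And>k. k \<noteq> j \<Longrightarrow> u k = x k" using assms(7) unfolding chi_prod_def by auto
  have y1: "\<And>k. k \<noteq> i \<Longrightarrow> y k = x k" using y(3) unfolding chi_prod_def by auto
  have tu: "tt u = tt x + 1" using tt_child[OF assms(3,5,7)] .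
  have ty: "tt y = tt x + 1" using tt_child[OF assms(2,5) y(3)] .
  have ci: "card (Ch i u) = card (Ch i x)" using Ch_card[OF assms(2,4)] Ch_card[OF assms(2,5)] u1[of i] assms(1) by simp
  have cj: "card (Ch j y) = card (Ch j x)" using Ch_card[OF assms(3) y(1)] Ch_card[OF assms(3,5)] y1[of j] assms(1) by simp
  have di: "u i = x i" using u1 assms(1) by simp
  have dj: "y j = x j" using y1 assms(1) by simp
  show ?thesis
    unfolding lam_eq[OF assms(2,4,6)] lam_eq[OF assms(3,5,7)] lam_eq[OF assms(3) y(1,2)] lam_eq[OF assms(2,5) y(3)]
      tu ty ci cj di dj
    by (simp add: real_sqrt_mult[symmetric] ac_simps)
qed

lemma S_comm:
  assumes "i < d" "j < d"
  shows "S i (S j f) w = S j (S i f) w"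
proof (cases "i = j")
  case True then show ?thesis by simp
next
  case ne: False
  show ?thesis
  proof (cases "\<exists>u\<in>V. \<exists>x\<in>V. w \<in> Ch i u \<and> u \<in> Ch j x")
    case True
    then obtain u x where ux: "u \<in> V" "x \<in> V" "w \<in> Ch i u" "u \<in> Ch j x" by blast
    define y where "y = w(j := x j)"
    have y: "y \<in> V" "w \<in> Ch j y" "y \<in> Ch i x"
      using comm_aux[OF ne assms ux] unfolding y_def by auto
    have "S i (S j f) w = complex_of_real (lam i w) * (complex_of_real (lam j u) * f x)"
      using S_at[OF assms(1) ux(1,3)] S_at[OF assms(2) ux(2,4)] by simp
    also have "\<dots> = complex_of_real (lam i w * lam j u) * f x" by simp
    also have "\<dots> = complex_of_real (lam j w * lam i y) * f x"
      using lam_comm[OF ne assms ux y] by simp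
    also have "\<dots> = S j (S i f) w"
      using S_at[OF assms(2) y(1,2)] S_at[OF assms(1) ux(2) y(3)] by simp
    finally show ?thesis .
  next
    case False
    have L: "S i (S j f) w = 0"
    proof (cases "\<exists>u\<in>V. w \<in> Ch i u")
      case True
      then obtain u where u: "u \<in> V" "w \<in> Ch i u" by blast
      have "S j f u = 0" using False u by (intro S_zero) blast
      then show ?thesis using S_at[OF assms(1) u] by simp
    qed (rule S_zero)
    have R: "S j (S i f) w = 0"
    proof (cases "\<exists>y\<in>V. w \<in> Ch j y")
      case True
      then obtain y where y: "y \<in> V" "w \<in> Ch j y" by blast
      have "S i f y = 0"
      proof (rule S_zero, rule notI)
        assume "\<exists>x\<in>V. y \<in> Ch i x"
        then obtain x where x: "x \<in> V" "y \<in> Ch i x" by blast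
        have "w(i := x i) \<in> V \<and> w \<in> Ch i (w(i := x i)) \<and> w(i := x i) \<in> Ch j x"
          using comm_aux[of j i y x w] ne assms y x by auto
        then show False using False x by blast
      qed
      then show ?thesis using S_at[OF assms(2) y] by simp
    qed (rule S_zero)
    show ?thesis using L R by simp
  qed
qed

lemma S_outside: "w \<notin> V \<Longrightarrow> S i f w = 0"
  by (rule S_zero) (auto dest: Ch_sub)

lemma Union_Ch_sub: "(\<Union>v\<in>V. Ch i v) \<subseteq> V"
  using Ch_sub by blast

lemma Ch_disj: "i < d \<Longrightarrow> v \<in> V \<Longrightarrow> v' \<in> V \<Longrightarrow> v \<noteq> v' \<Longrightarrow> Ch i v \<inter> Ch i v' = {}"
  using par_unique by blast

lemma extend_has_sum:
  fixes h :: "_ \<Rightarrow> 'b::{comm_monoid_add,topological_space}"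
  assumes "(h has_sum s) (\<Union>v\<in>V. Ch i v)" "\<And>w. w \<in> V \<Longrightarrow> \<not> (\<exists>v\<in>V. w \<in> Ch i v) \<Longrightarrow> h w = 0"
  shows "(h has_sum s) V"
proof -
  have "(h has_sum s) (\<Union>v\<in>V. Ch i v) \<longleftrightarrow> (h has_sum s) V"
    by (rule has_sum_cong_neutral) (use assms(2) Union_Ch_sub in auto)
  then show ?thesis using assms(1) by blast
qed

lemma norm_hs:
  assumes i: "i < d" and f: "in_l2 V f" and M: "\<forall>t. c t \<le> M"
  shows "((\<lambda>w. (norm (S i f w))\<^sup>2) has_sum (\<Sum>\<^sub>\<infinity>v\<in>V. A i v * (norm (f v))\<^sup>2)) V
         \<and> (\<lambda>v. A i v * (norm (f v))\<^sup>2) summable_on V"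
proof -
  have fs: "(\<lambda>v. (norm (f v))\<^sup>2) summable_on V" using f unfolding in_l2_def by blast
  have sumeq: "(\<Sum>w\<in>Ch i v. (norm (S i f w))\<^sup>2) = A i v * (norm (f v))\<^sup>2" if v: "v \<in> V" for v
  proof -
    have "(\<Sum>w\<in>Ch i v. (norm (S i f w))\<^sup>2) = (\<Sum>w\<in>Ch i v. (lam i w)\<^sup>2 * (norm (f v))\<^sup>2)"
      using S_at[OF i v] by (intro sum.cong) (auto simp: norm_mult power_mult_distrib)
    also have "\<dots> = (\<Sum>w\<in>Ch i v. (lam i w)\<^sup>2) * (norm (f v))\<^sup>2" by (simp only: sum_distrib_right)
    also have "\<dots> = A i v * (norm (f v))\<^sup>2" using A_sum[OF i v] by simp
    finally show ?thesis .
  qed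
  have sm: "(\<lambda>v. A i v * (norm (f v))\<^sup>2) summable_on V"
  proof (rule summable_on_comparison_test[OF summable_on_cmult_right[OF fs, of M]])
    fix v assume "v \<in> V"
    have "A i v \<le> M" using A_le[OF i, of v] M by (meson order_trans)
    then show "A i v * (norm (f v))\<^sup>2 \<le> M * (norm (f v))\<^sup>2" by (intro mult_right_mono) auto
    show "0 \<le> A i v * (norm (f v))\<^sup>2" using A_nonneg by simp
  qed
  have sm': "(\<lambda>v. \<Sum>w\<in>Ch i v. norm ((norm (S i f w))\<^sup>2)) summable_on V"
    using sm by (rule summable_on_cong[THEN iffD1, rotated]) (simp add: sumeq)
  have hs: "((\<lambda>w. (norm (S i f w))\<^sup>2) has_sum (\<Sum>\<^sub>\<infinity>v\<in>V. \<Sum>w\<in>Ch i v. (norm (S i f w))\<^sup>2)) (\<Union>v\<in>V. Ch i v)"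
    by (rule transfer_has_sum[OF Ch_finite[OF i] Ch_disj[OF i] sm'])
  have "(\<Sum>\<^sub>\<infinity>v\<in>V. \<Sum>w\<in>Ch i v. (norm (S i f w))\<^sup>2) = (\<Sum>\<^sub>\<infinity>v\<in>V. A i v * (norm (f v))\<^sup>2)"
    by (rule infsum_cong) (simp add: sumeq)
  with hs have "((\<lambda>w. (norm (S i f w))\<^sup>2) has_sum (\<Sum>\<^sub>\<infinity>v\<in>V. A i v * (norm (f v))\<^sup>2)) V"
    by (intro extend_has_sum[where i=i]) (auto intro: S_zero)
  then show ?thesis using sm by blast
qed

lemma inner_hs:
  assumes i: "i < d" and f: "in_l2 V f" and g: "in_l2 V g" and M: "\<forall>t. c t \<le> M"
  shows "((\<lambda>w. S i f w * cnj (S i g w)) has_sum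
            (\<Sum>\<^sub>\<infinity>v\<in>V. complex_of_real (A i v) * (f v * cnj (g v)))) V
         \<and> (\<lambda>v. complex_of_real (A i v) * (f v * cnj (g v))) summable_on V"
proof -
  have fs: "(\<lambda>v. (norm (f v))\<^sup>2) summable_on V" using f unfolding in_l2_def by blast
  have gs: "(\<lambda>v. (norm (g v))\<^sup>2) summable_on V" using g unfolding in_l2_def by blast
  have fgs: "(\<lambda>v. M * ((norm (f v))\<^sup>2 + (norm (g v))\<^sup>2)) summable_on V"
    by (intro summable_on_cmult_right summable_on_add fs gs)
  have sumeq: "(\<Sum>w\<in>Ch i v. S i f w * cnj (S i g w)) = complex_of_real (A i v) * (f v * cnj (g v))"
    if v: "v \<in> V" for v
  proof -
    have "(\<Sum>w\<in>Ch i v. S i f w * cnj (S i g w)) = (\<Sum>w\<in>Ch i v. complex_of_real ((lam i w)\<^sup>2) * (f v * cnj (g v)))"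
      using S_at[OF i v] by (intro sum.cong) (auto simp: power2_eq_square)
    also have "\<dots> = complex_of_real (\<Sum>w\<in>Ch i v. (lam i w)\<^sup>2) * (f v * cnj (g v))"
      by (simp only: sum_distrib_right of_real_sum)
    also have "\<dots> = complex_of_real (A i v) * (f v * cnj (g v))"
      using A_sum[OF i v] by simp
    finally show ?thesis .
  qed
  have nsumeq: "(\<Sum>w\<in>Ch i v. norm (S i f w * cnj (S i g w))) = A i v * (norm (f v) * norm (g v))"
    if v: "v \<in> V" for v
  proof -
    have "(\<Sum>w\<in>Ch i v. norm (S i f w * cnj (S i g w))) = (\<Sum>w\<in>Ch i v. (lam i w)\<^sup>2 * (norm (f v) * norm (g v)))"
      using S_at[OF i v] by (intro sum.cong) (auto simp: norm_mult power2_eq_square)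
    also have "\<dots> = (\<Sum>w\<in>Ch i v. (lam i w)\<^sup>2) * (norm (f v) * norm (g v))" by (simp only: sum_distrib_right)
    also have "\<dots> = A i v * (norm (f v) * norm (g v))" using A_sum[OF i v] by simp
    finally show ?thesis .
  qed
  have sm: "(\<lambda>v. A i v * (norm (f v) * norm (g v))) summable_on V"
  proof (rule summable_on_comparison_test[OF fgs])
    fix v assume "v \<in> V"
    have AM: "A i v \<le> M" using A_le[OF i, of v] M by (meson order_trans)
    have h0: "0 \<le> (norm (f v) - norm (g v))\<^sup>2" by simp
    have h1: "0 \<le> norm (f v) * norm (g v)" by simp
    have fg: "norm (f v) * norm (g v) \<le> (norm (f v))\<^sup>2 + (norm (g v))\<^sup>2"
      using h0 h1 unfolding power2_diff by linarith
    have M0: "0 \<le> M" using AM A_nonneg[of i v] by linarith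
    show "A i v * (norm (f v) * norm (g v)) \<le> M * ((norm (f v))\<^sup>2 + (norm (g v))\<^sup>2)"
      by (rule mult_mono[OF AM fg M0 h1])
    show "0 \<le> A i v * (norm (f v) * norm (g v))" using A_nonneg by simp
  qed
  have sm': "(\<lambda>v. \<Sum>w\<in>Ch i v. norm (S i f w * cnj (S i g w))) summable_on V"
    using sm by (rule summable_on_cong[THEN iffD1, rotated]) (simp add: nsumeq)
  have hs: "((\<lambda>w. S i f w * cnj (S i g w)) has_sum (\<Sum>\<^sub>\<infinity>v\<in>V. \<Sum>w\<in>Ch i v. S i f w * cnj (S i g w))) (\<Union>v\<in>V. Ch i v)"
    by (rule transfer_has_sum[OF Ch_finite[OF i] Ch_disj[OF i] sm'])
  have "(\<Sum>\<^sub>\<infinity>v\<in>V. \<Sum>w\<in>Ch i v. S i f w * cnj (S i g w)) = (\<Sum>\<^sub>\<infinity>v\<in>V. complex_of_real (A i v) * (f v * cnj (g v)))"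
    by (rule infsum_cong) (simp add: sumeq)
  with hs have H: "((\<lambda>w. S i f w * cnj (S i g w)) has_sum (\<Sum>\<^sub>\<infinity>v\<in>V. complex_of_real (A i v) * (f v * cnj (g v)))) V"
    by (intro extend_has_sum[where i=i]) (auto intro: S_zero)
  have "(\<lambda>v. complex_of_real (A i v) * (f v * cnj (g v))) summable_on V"
  proof (rule abs_summable_summable)
    show "(\<lambda>v. norm (complex_of_real (A i v) * (f v * cnj (g v)))) summable_on V"
      using sm by (rule summable_on_cong[THEN iffD1, rotated]) (simp add: norm_mult A_nonneg)
  qed
  then show ?thesis using H by blast
qed

end

context PT begin

lemma single_has_sum:
  fixes g :: "_ \<Rightarrow> 'b::{comm_monoid_add,topological_space}"
  assumes "v \<in> W" "\<And>u. u \<in> W \<Longrightarrow> u \<noteq> v \<Longrightarrow> g u = 0"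
  shows "(g has_sum g v) W"
proof -
  have "(g has_sum g v) {v}" using has_sum_finite[of "{v}" g] by simp
  moreover have "(g has_sum g v) {v} \<longleftrightarrow> (g has_sum g v) W"
    by (rule has_sum_cong_neutral) (use assms in auto)
  ultimately show ?thesis by blast
qed

lemma ebasis_l2: "v \<in> V \<Longrightarrow> in_l2 V (ebasis v)"
  unfolding in_l2_def
proof
  assume v: "v \<in> V"
  show "\<forall>u. u \<notin> V \<longrightarrow> ebasis v u = 0" using v by (auto simp: ebasis_def)
  have "((\<lambda>u. (norm (ebasis v u))\<^sup>2) has_sum (norm (ebasis v v))\<^sup>2) V"
    by (rule single_has_sum[OF v]) (auto simp: ebasis_def)
  then show "(\<lambda>u. (norm (ebasis v u))\<^sup>2) summable_on V" by (auto simp: summable_on_def)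
qed

lemma bounded_part:
  assumes M: "\<forall>t. c t \<le> M" and i: "i < d"
  shows "bounded_op V (S i)"
    unfolding bounded_op_def
  proof (rule exI[of _ "sqrt M"], intro allI impI conjI)
    fix f assume f: "in_l2 V f"
    from norm_hs[OF i f M] have H: "((\<lambda>w. (norm (S i f w))\<^sup>2) has_sum (\<Sum>\<^sub>\<infinity>v\<in>V. A i v * (norm (f v))\<^sup>2)) V"
      and sm: "(\<lambda>v. A i v * (norm (f v))\<^sup>2) summable_on V" by blast+
    show "in_l2 V (S i f)" unfolding in_l2_def using H S_outside by (auto simp: summable_on_def)
    have fs: "(\<lambda>v. (norm (f v))\<^sup>2) summable_on V" using f unfolding in_l2_def by blast
    have "(\<Sum>\<^sub>\<infinity>v\<in>V. (norm (S i f v))\<^sup>2) = (\<Sum>\<^sub>\<infinity>v\<in>V. A i v * (norm (f v))\<^sup>2)" using H infsumI by blast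
    also have "\<dots> \<le> (\<Sum>\<^sub>\<infinity>v\<in>V. M * (norm (f v))\<^sup>2)"
    proof (rule infsum_mono[OF sm summable_on_cmult_right[OF fs]])
      fix v assume "v \<in> V"
      have "A i v \<le> M" using A_le[OF i, of v] M by (meson order_trans)
      then show "A i v * (norm (f v))\<^sup>2 \<le> M * (norm (f v))\<^sup>2" by (intro mult_right_mono) auto
    qed
    also have "\<dots> = M * (\<Sum>\<^sub>\<infinity>v\<in>V. (norm (f v))\<^sup>2)" by (rule infsum_cmult_right) (use fs in auto)
    finally have "sqrt (\<Sum>\<^sub>\<infinity>v\<in>V. (norm (S i f v))\<^sup>2) \<le> sqrt (M * (\<Sum>\<^sub>\<infinity>v\<in>V. (norm (f v))\<^sup>2))"
      by (rule real_sqrt_le_mono)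
    then show "l2norm V (S i f) \<le> sqrt M * l2norm V f"
      unfolding l2norm_def by (simp add: real_sqrt_mult)
  qed

lemma sph_part:
  assumes M: "\<forall>t. c t \<le> M"
  shows "spherically_balanced d V tt S"
    unfolding spherically_balanced_def
  proof (intro conjI allI)
    show "commuting d V S" unfolding commuting_def using S_comm by blast
    fix t
    show "\<exists>K. \<forall>v\<in>V. tt v = t \<longrightarrow> (\<Sum>j<d. (l2norm V (S j (ebasis v)))\<^sup>2) = K"
    proof (rule exI[of _ "c t"], intro ballI impI)
      fix v assume v: "v \<in> V" and tv: "tt v = t"
      have eachj: "(l2norm V (S j (ebasis v)))\<^sup>2 = A j v" if j: "j < d" for j
      proof -
        from norm_hs[OF j ebasis_l2[OF v] M] have H:
          "((\<lambda>w. (norm (S j (ebasis v) w))\<^sup>2) has_sum (\<Sum>\<^sub>\<infinity>u\<in>V. A j u * (norm (ebasis v u))\<^sup>2)) V" by blast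
        have "((\<lambda>u. A j u * (norm (ebasis v u))\<^sup>2) has_sum (A j v * (norm (ebasis v v))\<^sup>2)) V"
          by (rule single_has_sum[OF v]) (auto simp: ebasis_def)
        then have e1: "(\<Sum>\<^sub>\<infinity>u\<in>V. A j u * (norm (ebasis v u))\<^sup>2) = A j v" using infsumI by (simp add: ebasis_def)
        have "(\<Sum>\<^sub>\<infinity>w\<in>V. (norm (S j (ebasis v) w))\<^sup>2) = A j v" using infsumI[OF H] e1 by simp
        then show ?thesis unfolding l2norm_def using A_nonneg by simp
      qed
      have "(\<Sum>j<d. (l2norm V (S j (ebasis v)))\<^sup>2) = (\<Sum>j<d. A j v)" using eachj by simp
      also have "\<dots> = c t" using A_total[OF v] tv by simp
      finally show "(\<Sum>j<d. (l2norm V (S j (ebasis v)))\<^sup>2) = c t" .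
    qed
  qed

lemma iso_part:
  assumes M: "\<forall>t. c t \<le> M" and c1: "\<forall>t. c t = 1"
  shows "joint_isometry d V S"
    unfolding joint_isometry_def
  proof (intro allI impI)
    fix f g assume fg: "in_l2 V f \<and> in_l2 V g"
    have H: "\<And>j. j \<in> {..<d} \<Longrightarrow> ((\<lambda>w. S j f w * cnj (S j g w)) has_sum
            (\<Sum>\<^sub>\<infinity>v\<in>V. complex_of_real (A j v) * (f v * cnj (g v)))) V
         \<and> (\<lambda>v. complex_of_real (A j v) * (f v * cnj (g v))) summable_on V"
      using inner_hs fg M by blast
    have "(\<Sum>j<d. l2inner V (S j f) (S j g)) = (\<Sum>j<d. \<Sum>\<^sub>\<infinity>v\<in>V. complex_of_real (A j v) * (f v * cnj (g v)))"
      unfolding l2inner_def by (intro sum.cong refl infsumI) (use H in blast)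
    also have "\<dots> = (\<Sum>\<^sub>\<infinity>v\<in>V. \<Sum>j<d. complex_of_real (A j v) * (f v * cnj (g v)))"
    proof -
      have "((\<lambda>v. \<Sum>j<d. complex_of_real (A j v) * (f v * cnj (g v))) has_sum
              (\<Sum>j<d. \<Sum>\<^sub>\<infinity>v\<in>V. complex_of_real (A j v) * (f v * cnj (g v)))) V"
        by (rule has_sum_sum_fin) (use H in auto)
      then show ?thesis by (rule infsumI[THEN sym])
    qed
    also have "\<dots> = (\<Sum>\<^sub>\<infinity>v\<in>V. f v * cnj (g v))"
    proof (rule infsum_cong)
      fix v assume v: "v \<in> V"
      have "(\<Sum>j<d. complex_of_real (A j v) * (f v * cnj (g v))) = complex_of_real (\<Sum>j<d. A j v) * (f v * cnj (g v))"
        by (simp add: sum_distrib_right)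
      then show "(\<Sum>j<d. complex_of_real (A j v) * (f v * cnj (g v))) = f v * cnj (g v)"
        using A_total[OF v] c1 by simp
    qed
    finally show "(\<Sum>j<d. l2inner V (S j f) (S j g)) = l2inner V f g" unfolding l2inner_def .
  qed

lemma main_all:
  assumes M: "\<forall>t. c t \<le> M"
  shows "(\<forall>i<d. bounded_op V (S i))
         \<and> spherically_balanced d V tt S
         \<and> ((\<forall>t. c t = 1) \<longrightarrow> joint_isometry d V S)"
  using bounded_part[OF M] sph_part[OF M] iso_part[OF M] by blast

end

theorem mainTheorem20:
  fixes d :: nat
    and Vs :: "nat \<Rightarrow> 'a set"
    and Es :: "nat \<Rightarrow> ('a \<times> 'a) set"
    and rs :: "nat \<Rightarrow> 'a"
    and c :: "nat \<Rightarrow> real"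
  assumes "d \<ge> 1"
    and "\<forall>j<d. rooted_dtree (Vs j) (Es j) (rs j) \<and> locally_finite_tree (Vs j) (Es j)
                \<and> leafless (Vs j) (Es j)"
    and "\<forall>t. c t > 0"
    and "\<exists>M. \<forall>t. c t \<le> M"
  shows "(\<forall>i<d. bounded_op (prodV d Vs)
                  (mshift (prodV d Vs) (chi_prod d Vs Es) (lamC d Vs Es rs c) i))
         \<and> spherically_balanced d (prodV d Vs) (abs_depth d Es rs)
             (mshift (prodV d Vs) (chi_prod d Vs Es) (lamC d Vs Es rs c))
         \<and> ((\<forall>t. c t = 1) \<longrightarrow>
             joint_isometry d (prodV d Vs)
               (mshift (prodV d Vs) (chi_prod d Vs Es) (lamC d Vs Es rs c)))"
proof -
  interpret PT d Vs Es rs c using assms(1-3) by unfold_locales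
  obtain M where "\<forall>t. c t \<le> M" using assms(4) by blast
  then show ?thesis by (rule main_all)
qed

end
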